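(* For every $n\geq3$, the dominating ideal $DI(C_n)=\bigcap_{i=1}^n(x_i,x_{i+1},x_{i+2})\subset K[x_1,\ldots,x_n]$ (indices modulo $n$) of the cycle $C_n$ is nearly normally torsion-free.
   Context: $C_n$ is the cycle with vertices $x_1,\ldots,x_n$ and edges $\{x_i,x_{i+1}\}$ ($1\le i\le n-1$) and $\{x_n,x_1\}$. For a simple graph $G$, $N_G[i]=\{j:\{i,j\}\in E(G)\}\cup\{i\}$; $S\subseteq V(G)$ is a dominating set if $S\cap N_G[v]\neq\emptyset$ for all $v$, and $DI(G)=(\prod_{i\in S}x_i : S\text{ a minimal dominating set})$. A monomial ideal $I\subset R$ is nearly normally torsion-free if there exist a positive integer $k$ and a monomial prime ideal $\mathfrak p$ such that $\mathrm{Ass}(R/I^m)=\mathrm{Min}(I)$ for all $1\le m\le k$ and $\mathrm{Ass}(R/I^m)\subseteq\mathrm{Min}(I)\cup\{\mathfrak p\}$ for all $m\geq k+1$, where $\mathrm{Ass}$ and $\mathrm{Min}$ denote associated and minimal primes. *)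

theory Defs
  imports "HOL-Library.Poly_Mapping"
begin

text \<open>The ring K[x_1,...,x_n] is the subring of polynomials whose monomials only involve
the variables 0,...,n-1 (variable x_(i+1) of the paper is index i here).\<close>

type_synonym 'k mpoly = "(nat \<Rightarrow>\<^sub>0 nat) \<Rightarrow>\<^sub>0 'k"

definition polys :: "nat \<Rightarrow> 'k::field mpoly set" where
  "polys n = {p :: 'k mpoly. \<forall>m \<in> Poly_Mapping.keys p. Poly_Mapping.keys m \<subseteq> {..<n}}"

definition Var :: "nat \<Rightarrow> 'k::field mpoly" where
  "Var i = Poly_Mapping.single (Poly_Mapping.single i 1) 1"

definition is_ideal :: "nat \<Rightarrow> 'k::field mpoly set \<Rightarrow> bool" where
  "is_ideal n I \<longleftrightarrow> I \<subseteq> polys n \<and> 0 \<in> I \<and> (\<forall>f\<in>I. \<forall>g\<in>I. f + g \<in> I)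
     \<and> (\<forall>f\<in>I. \<forall>r\<in>polys n. r * f \<in> I)"

definition ideal_gen :: "nat \<Rightarrow> 'k::field mpoly set \<Rightarrow> 'k mpoly set" where
  "ideal_gen n G = \<Inter>{I. is_ideal n I \<and> G \<subseteq> I}"

definition is_monomial :: "nat \<Rightarrow> 'k::field mpoly \<Rightarrow> bool" where
  "is_monomial n p \<longleftrightarrow> (\<exists>m :: nat \<Rightarrow>\<^sub>0 nat. Poly_Mapping.keys m \<subseteq> {..<n} \<and> p = Poly_Mapping.single m 1)"

definition monomial_ideal :: "nat \<Rightarrow> 'k::field mpoly set \<Rightarrow> bool" where
  "monomial_ideal n I \<longleftrightarrow> (\<exists>G. (\<forall>g\<in>G. is_monomial n g) \<and> I = ideal_gen n G)"

definition prime_ideal :: "nat \<Rightarrow> 'k::field mpoly set \<Rightarrow> bool" where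
  "prime_ideal n P \<longleftrightarrow> is_ideal n P \<and> P \<noteq> polys n \<and>
     (\<forall>f\<in>polys n. \<forall>g\<in>polys n. f * g \<in> P \<longrightarrow> f \<in> P \<or> g \<in> P)"

fun ideal_pow :: "nat \<Rightarrow> 'k::field mpoly set \<Rightarrow> nat \<Rightarrow> 'k mpoly set" where
  "ideal_pow n I 0 = polys n"
| "ideal_pow n I (Suc m) = ideal_gen n {f * g | f g. f \<in> I \<and> g \<in> ideal_pow n I m}"

definition Ass :: "nat \<Rightarrow> 'k::field mpoly set \<Rightarrow> 'k mpoly set set" where
  "Ass n I = {P. prime_ideal n P \<and> (\<exists>f\<in>polys n. P = {g \<in> polys n. g * f \<in> I})}"

definition minprimes :: "nat \<Rightarrow> 'k::field mpoly set \<Rightarrow> 'k mpoly set set" where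
  "minprimes n I = {P. prime_ideal n P \<and> I \<subseteq> P \<and>
      (\<forall>Q. prime_ideal n Q \<and> I \<subseteq> Q \<and> Q \<subseteq> P \<longrightarrow> Q = P)}"

definition nearly_normally_torsion_free :: "nat \<Rightarrow> 'k::field mpoly set \<Rightarrow> bool" where
  "nearly_normally_torsion_free n I \<longleftrightarrow>
     (\<exists>k::nat. \<exists>\<pp>. k \<ge> 1 \<and> monomial_ideal n \<pp> \<and> prime_ideal n \<pp> \<and>
        (\<forall>m. 1 \<le> m \<and> m \<le> k \<longrightarrow> Ass n (ideal_pow n I m) = minprimes n I) \<and>
        (\<forall>m. m \<ge> k + 1 \<longrightarrow> Ass n (ideal_pow n I m) \<subseteq> minprimes n I \<union> {\<pp>}))"

definition cycle_adj :: "nat \<Rightarrow> nat \<Rightarrow> nat \<Rightarrow> bool" where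
  "cycle_adj n i j \<longleftrightarrow> i < n \<and> j < n \<and> i \<noteq> j \<and> (j = (i + 1) mod n \<or> i = (j + 1) mod n)"

definition closed_nbhd :: "nat \<Rightarrow> nat \<Rightarrow> nat set" where
  "closed_nbhd n i = {j. cycle_adj n i j} \<union> {i}"

definition dominating :: "nat \<Rightarrow> nat set \<Rightarrow> bool" where
  "dominating n S \<longleftrightarrow> S \<subseteq> {..<n} \<and> (\<forall>v<n. S \<inter> closed_nbhd n v \<noteq> {})"

definition minimal_dominating :: "nat \<Rightarrow> nat set \<Rightarrow> bool" where
  "minimal_dominating n S \<longleftrightarrow> dominating n S \<and> (\<forall>T. T \<subset> S \<longrightarrow> \<not> dominating n T)"

definition dominating_ideal_cycle :: "nat \<Rightarrow> 'k::field mpoly set" where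
  "dominating_ideal_cycle n =
     ideal_gen n {(\<Prod>i\<in>S. Var i) | S. minimal_dominating n S}"

end

theory Submission
  imports Defs
begin


abbreviation mnm :: "(nat \<Rightarrow>\<^sub>0 nat) \<Rightarrow> 'k::field mpoly" where
  "mnm \<mu> \<equiv> Poly_Mapping.single \<mu> 1"

lemma lookup_minus_nat: "Poly_Mapping.lookup ((a::nat\<Rightarrow>\<^sub>0nat) - b) i = Poly_Mapping.lookup a i - Poly_Mapping.lookup b i"
  by transfer simp

lemma polys_iff: "p \<in> polys n \<longleftrightarrow> (\<forall>m\<in>Poly_Mapping.keys p. Poly_Mapping.keys m \<subseteq> {..<n})"
  by (simp add: polys_def)

lemma keys_add_nat: "Poly_Mapping.keys ((a::nat\<Rightarrow>\<^sub>0nat) + b) = Poly_Mapping.keys a \<union> Poly_Mapping.keys b"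
  by (auto simp: in_keys_iff lookup_add)

lemma polys_add: "p \<in> polys n \<Longrightarrow> q \<in> polys n \<Longrightarrow> p + q \<in> polys n"
  using keys_add[of p q] by (auto simp: polys_iff)

lemma polys_mult: "p \<in> polys n \<Longrightarrow> q \<in> polys n \<Longrightarrow> p * q \<in> polys n"
  using keys_mult[of p q] by (fastforce simp: polys_iff keys_add_nat)

lemma polys_zero[simp]: "0 \<in> polys n" by (simp add: polys_iff)
lemma polys_one[simp]: "1 \<in> polys n" by (simp add: polys_iff)

lemma polys_single: "Poly_Mapping.keys \<mu> \<subseteq> {..<n} \<Longrightarrow> Poly_Mapping.single \<mu> c \<in> polys n"
  by (simp add: polys_iff)

lemma polys_single0: "Poly_Mapping.single 0 c \<in> polys n"
  by (simp add: polys_iff)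

lemma Var_polys: "i < n \<Longrightarrow> (Var i :: 'k::field mpoly) \<in> polys n"
  by (simp add: Var_def polys_iff)

lemma polys_ideal: "is_ideal n (polys n)"
  by (simp add: is_ideal_def polys_add polys_mult)

lemma ideal_gen_ideal:
  assumes "G \<subseteq> polys n" shows "is_ideal n (ideal_gen n G)"
proof -
  let ?F = "{I. is_ideal n I \<and> G \<subseteq> I}"
  have pf: "polys n \<in> ?F" using assms polys_ideal by blast
  have sub: "ideal_gen n G \<subseteq> polys n" unfolding ideal_gen_def using pf by blast
  have z: "0 \<in> ideal_gen n G" unfolding ideal_gen_def by (auto simp: is_ideal_def)
  have a: "\<forall>f\<in>ideal_gen n G. \<forall>g\<in>ideal_gen n G. f + g \<in> ideal_gen n G"
    unfolding ideal_gen_def by (auto simp: is_ideal_def)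
  have m: "\<forall>f\<in>ideal_gen n G. \<forall>r\<in>polys n. r * f \<in> ideal_gen n G"
    unfolding ideal_gen_def by (auto simp: is_ideal_def)
  show ?thesis using sub z a m by (simp add: is_ideal_def)
qed

lemma ideal_gen_sub: "G \<subseteq> ideal_gen n G"
  unfolding ideal_gen_def by blast

lemma ideal_gen_min: "is_ideal n J \<Longrightarrow> G \<subseteq> J \<Longrightarrow> ideal_gen n G \<subseteq> J"
  unfolding ideal_gen_def by blast

lemma ideal_sum:
  assumes "is_ideal n J" "\<And>x. x \<in> A \<Longrightarrow> F x \<in> J"
  shows "sum F A \<in> J"
  using assms(2)
proof (induction A rule: infinite_finite_induct)
  case (infinite A) then show ?case using assms(1) by (simp add: is_ideal_def)
next
  case empty then show ?case using assms(1) by (simp add: is_ideal_def)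
next
  case (insert x F) then show ?case using assms(1) by (simp add: is_ideal_def)
qed

lemma ideal_mult: "is_ideal n J \<Longrightarrow> r \<in> polys n \<Longrightarrow> f \<in> J \<Longrightarrow> r * f \<in> J"
  by (simp add: is_ideal_def)

lemma ideal_mult2: "is_ideal n J \<Longrightarrow> r \<in> polys n \<Longrightarrow> f \<in> J \<Longrightarrow> f * r \<in> J"
  by (simp add: is_ideal_def mult.commute)

lemma ideal_polys: "is_ideal n J \<Longrightarrow> f \<in> J \<Longrightarrow> f \<in> polys n"
  by (auto simp: is_ideal_def)

lemma poly_decomp:
  "p = (\<Sum>\<mu>\<in>Poly_Mapping.keys p. Poly_Mapping.single \<mu> (Poly_Mapping.lookup p \<mu>))"
proof (rule poly_mapping_eqI)
  fix k
  show "Poly_Mapping.lookup p k = Poly_Mapping.lookup (\<Sum>\<mu>\<in>Poly_Mapping.keys p. Poly_Mapping.single \<mu> (Poly_Mapping.lookup p \<mu>)) k"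
    by (cases "k \<in> Poly_Mapping.keys p")
       (auto simp: lookup_sum lookup_single when_def in_keys_iff sum.delta)
qed

lemma single_as_mult: "Poly_Mapping.single \<mu> (c::'k::field) = Poly_Mapping.single 0 c * mnm \<mu>"
  by (simp add: mult_single)

lemma ideal_by_monos:
  assumes J: "is_ideal n J" and p: "p \<in> polys n"
    and h: "\<And>\<mu>. \<mu> \<in> Poly_Mapping.keys p \<Longrightarrow> (mnm \<mu> :: 'k::field mpoly) \<in> J"
  shows "(p :: 'k mpoly) \<in> J"
proof -
  have "(\<Sum>\<mu>\<in>Poly_Mapping.keys p. Poly_Mapping.single \<mu> (Poly_Mapping.lookup p \<mu>)) \<in> J"
    by (rule ideal_sum[OF J]) (metis single_as_mult ideal_mult[OF J polys_single0 h])
  then show ?thesis using poly_decomp[of p] by simp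
qed

lemma mono_dvd:
  assumes J: "is_ideal n J" and le: "\<And>i. Poly_Mapping.lookup \<nu> i \<le> Poly_Mapping.lookup \<mu> i"
    and k: "Poly_Mapping.keys \<mu> \<subseteq> {..<n}" and nu: "(mnm \<nu> :: 'k::field mpoly) \<in> J"
  shows "(mnm \<mu> :: 'k mpoly) \<in> J"
proof -
  have e: "\<mu> = (\<mu> - \<nu>) + \<nu>"
    by (rule poly_mapping_eqI) (simp add: lookup_add lookup_minus_nat le)
  have "Poly_Mapping.keys (\<mu> - \<nu>) \<subseteq> {..<n}"
  proof
    fix x assume "x \<in> Poly_Mapping.keys (\<mu> - \<nu>)"
    then have "x \<in> Poly_Mapping.keys \<mu>" by (auto simp: in_keys_iff lookup_minus_nat)
    then show "x \<in> {..<n}" using k by blast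
  qed
  then have "(mnm (\<mu> - \<nu>) :: 'k mpoly) * mnm \<nu> \<in> J"
    by (intro ideal_mult[OF J polys_single nu])
  then show ?thesis by (subst e) (simp add: mult_single)
qed


definition wdeg :: "nat set \<Rightarrow> (nat \<Rightarrow>\<^sub>0 nat) \<Rightarrow> nat" where
  "wdeg W \<mu> = (\<Sum>i\<in>W. Poly_Mapping.lookup \<mu> i)"

definition Qs :: "nat \<Rightarrow> nat set \<Rightarrow> nat \<Rightarrow> 'k::field mpoly set" where
  "Qs n W d = {p \<in> polys n. \<forall>\<mu>\<in>Poly_Mapping.keys p. d \<le> wdeg W \<mu>}"

lemma wdeg_add: "wdeg W (a + b) = wdeg W a + wdeg W b"
  by (simp add: wdeg_def lookup_add sum.distrib)

lemma wdeg_zero[simp]: "wdeg W 0 = 0"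
  by (simp add: wdeg_def)

lemma wdeg_single: "finite W \<Longrightarrow> wdeg W (Poly_Mapping.single i k) = (if i \<in> W then k else 0)"
  by (simp add: wdeg_def lookup_single when_def sum.delta)

lemma keys_mult_ge:
  assumes "\<forall>\<mu>\<in>Poly_Mapping.keys p. a \<le> wdeg W \<mu>" "\<forall>\<mu>\<in>Poly_Mapping.keys q. b \<le> wdeg W \<mu>"
  shows "\<forall>\<mu>\<in>Poly_Mapping.keys (p * (q::'k::field mpoly)). a + b \<le> wdeg W \<mu>"
proof
  fix \<mu> assume "\<mu> \<in> Poly_Mapping.keys (p * q)"
  then obtain x y where "\<mu> = x + y" "x \<in> Poly_Mapping.keys p" "y \<in> Poly_Mapping.keys q"
    using keys_mult[of p q] by blast
  then show "a + b \<le> wdeg W \<mu>" using assms by (simp add: wdeg_add add_mono)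
qed

lemma Qs_ideal: "is_ideal n (Qs n W d)"
proof -
  have "\<forall>f\<in>Qs n W d. \<forall>r\<in>polys n. r * f \<in> Qs n W d"
    using keys_mult_ge[of _ 0 W _ d] by (auto simp: Qs_def polys_mult)
  moreover have "\<forall>f\<in>Qs n W d. \<forall>g\<in>Qs n W d. f + g \<in> Qs n W d"
    using keys_add by (fastforce simp: Qs_def polys_add)
  ultimately show ?thesis by (auto simp: is_ideal_def Qs_def)
qed

lemma Qs_mult: "p \<in> Qs n W a \<Longrightarrow> q \<in> Qs n W b \<Longrightarrow> p * q \<in> Qs n W (a + b)"
  using keys_mult_ge[of p a W q b] by (auto simp: Qs_def polys_mult)

definition restr :: "((nat \<Rightarrow>\<^sub>0 nat) \<Rightarrow> bool) \<Rightarrow> 'k::field mpoly \<Rightarrow> 'k mpoly" where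
  "restr P p = Abs_poly_mapping (\<lambda>\<mu>. if P \<mu> then Poly_Mapping.lookup p \<mu> else 0)"

lemma lookup_restr: "Poly_Mapping.lookup (restr P p) \<mu> = (if P \<mu> then Poly_Mapping.lookup p \<mu> else 0)"
proof -
  have "finite {\<mu>. (if P \<mu> then Poly_Mapping.lookup p \<mu> else 0) \<noteq> 0}"
  proof (rule finite_subset)
    show "{\<mu>. (if P \<mu> then Poly_Mapping.lookup p \<mu> else 0) \<noteq> 0} \<subseteq> {\<mu>. Poly_Mapping.lookup p \<mu> \<noteq> 0}"
      by (auto split: if_splits)
  qed simp
  then show ?thesis by (simp add: restr_def)
qed

lemma restr_split: "p = restr P p + restr (\<lambda>\<mu>. \<not> P \<mu>) p"
  by (rule poly_mapping_eqI) (simp add: lookup_add lookup_restr)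

lemma keys_restr: "Poly_Mapping.keys (restr P p) = {\<mu> \<in> Poly_Mapping.keys p. P \<mu>}"
  by (auto simp: in_keys_iff lookup_restr split: if_splits)

lemma low_key:
  fixes g f :: "'k::field mpoly" and W :: "nat set"
  assumes g: "g \<noteq> 0" and f: "f \<noteq> 0"
  defines "dg \<equiv> Min (wdeg W ` Poly_Mapping.keys g)" and "df \<equiv> Min (wdeg W ` Poly_Mapping.keys f)"
  shows "\<exists>\<rho>\<in>Poly_Mapping.keys (g * f). wdeg W \<rho> = dg + df"
proof -
  have kg: "Poly_Mapping.keys g \<noteq> {}" "finite (Poly_Mapping.keys g)" using g by auto
  have kf: "Poly_Mapping.keys f \<noteq> {}" "finite (Poly_Mapping.keys f)" using f by auto
  have "dg \<in> wdeg W ` Poly_Mapping.keys g"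
    using Min_in[of "wdeg W ` Poly_Mapping.keys g"] kg unfolding dg_def by auto
  then obtain a where a: "a \<in> Poly_Mapping.keys g" "wdeg W a = dg" by auto
  have "df \<in> wdeg W ` Poly_Mapping.keys f"
    using Min_in[of "wdeg W ` Poly_Mapping.keys f"] kf unfolding df_def by auto
  then obtain b where b: "b \<in> Poly_Mapping.keys f" "wdeg W b = df" by auto
  have gmin: "\<And>\<mu>. \<mu> \<in> Poly_Mapping.keys g \<Longrightarrow> dg \<le> wdeg W \<mu>" unfolding dg_def using kg by auto
  have fmin: "\<And>\<mu>. \<mu> \<in> Poly_Mapping.keys f \<Longrightarrow> df \<le> wdeg W \<mu>" unfolding df_def using kf by auto
  define g0 where "g0 = restr (\<lambda>\<mu>. wdeg W \<mu> = dg) g"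
  define g1 where "g1 = restr (\<lambda>\<mu>. \<not> wdeg W \<mu> = dg) g"
  define f0 where "f0 = restr (\<lambda>\<mu>. wdeg W \<mu> = df) f"
  define f1 where "f1 = restr (\<lambda>\<mu>. \<not> wdeg W \<mu> = df) f"
  have gs: "g = g0 + g1" unfolding g0_def g1_def by (rule restr_split)
  have fs: "f = f0 + f1" unfolding f0_def f1_def by (rule restr_split)
  have g0k: "\<forall>\<mu>\<in>Poly_Mapping.keys g0. dg \<le> wdeg W \<mu>" by (auto simp: g0_def keys_restr)
  have f0k: "\<forall>\<mu>\<in>Poly_Mapping.keys f0. df \<le> wdeg W \<mu>" by (auto simp: f0_def keys_restr)
  have g1k: "\<forall>\<mu>\<in>Poly_Mapping.keys g1. dg + 1 \<le> wdeg W \<mu>"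
    using gmin by (force simp: g1_def keys_restr)
  have f1k: "\<forall>\<mu>\<in>Poly_Mapping.keys f1. df + 1 \<le> wdeg W \<mu>"
    using fmin by (force simp: f1_def keys_restr)
  have "a \<in> Poly_Mapping.keys g0" using a by (simp add: g0_def keys_restr)
  then have g0nz: "g0 \<noteq> 0" by auto
  have "b \<in> Poly_Mapping.keys f0" using b by (simp add: f0_def keys_restr)
  then have f0nz: "f0 \<noteq> 0" by auto
  have "g0 * f0 \<noteq> 0" using g0nz f0nz by simp
  then obtain \<rho> where \<rho>: "\<rho> \<in> Poly_Mapping.keys (g0 * f0)" by (metis all_not_in_conv keys_eq_empty)
  have deg\<rho>: "wdeg W \<rho> = dg + df"
  proof -
    obtain x y where "\<rho> = x + y" "x \<in> Poly_Mapping.keys g0" "y \<in> Poly_Mapping.keys f0"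
      using keys_mult[of g0 f0] \<rho> by blast
    then show ?thesis by (auto simp: wdeg_add g0_def f0_def keys_restr)
  qed
  define R where "R = g0 * f1 + g1 * f0 + g1 * f1"
  have prod: "g * f = g0 * f0 + R" unfolding R_def gs fs by (simp add: algebra_simps)
  have k1: "\<forall>\<mu>\<in>Poly_Mapping.keys (g0 * f1). dg + df + 1 \<le> wdeg W \<mu>"
    using keys_mult_ge[OF g0k f1k] by simp
  have k2: "\<forall>\<mu>\<in>Poly_Mapping.keys (g1 * f0). dg + df + 1 \<le> wdeg W \<mu>"
    using keys_mult_ge[OF g1k f0k] by simp
  have k3: "\<forall>\<mu>\<in>Poly_Mapping.keys (g1 * f1). dg + df + 1 \<le> wdeg W \<mu>"
  proof
    fix \<mu> assume "\<mu> \<in> Poly_Mapping.keys (g1 * f1)"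
    then have "dg + 1 + (df + 1) \<le> wdeg W \<mu>" using keys_mult_ge[OF g1k f1k] by blast
    then show "dg + df + 1 \<le> wdeg W \<mu>" by linarith
  qed
  have "\<forall>\<mu>\<in>Poly_Mapping.keys R. dg + df + 1 \<le> wdeg W \<mu>"
  proof
    fix \<mu> assume "\<mu> \<in> Poly_Mapping.keys R"
    moreover have "Poly_Mapping.keys R \<subseteq> Poly_Mapping.keys (g0 * f1) \<union> Poly_Mapping.keys (g1 * f0) \<union> Poly_Mapping.keys (g1 * f1)"
      unfolding R_def using keys_add[of "g0 * f1 + g1 * f0" "g1 * f1"] keys_add[of "g0 * f1" "g1 * f0"] by blast
    ultimately show "dg + df + 1 \<le> wdeg W \<mu>" using k1 k2 k3 by blast
  qed
  then have "\<rho> \<notin> Poly_Mapping.keys R" using deg\<rho> by auto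
  then have "Poly_Mapping.lookup (g * f) \<rho> = Poly_Mapping.lookup (g0 * f0) \<rho>"
    by (simp add: prod lookup_add in_keys_iff)
  then have "\<rho> \<in> Poly_Mapping.keys (g * f)" using \<rho> by (simp add: in_keys_iff)
  then show ?thesis using deg\<rho> by blast
qed

lemma Qs_primary:
  fixes g h :: "'k::field mpoly"
  assumes "g \<notin> Qs n W 1" "h \<notin> Qs n W m" "g \<in> polys n" "h \<in> polys n"
  shows "g * h \<notin> Qs n W m"
proof
  assume gh: "g * h \<in> Qs n W m"
  obtain a where a: "a \<in> Poly_Mapping.keys g" "wdeg W a = 0" using assms(1,3) by (force simp: Qs_def)
  obtain b where b: "b \<in> Poly_Mapping.keys h" "wdeg W b < m" using assms(2,4) by (force simp: Qs_def)
  have g0: "g \<noteq> 0" and h0: "h \<noteq> 0" using a b by auto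
  have "Min (wdeg W ` Poly_Mapping.keys g) = 0" using a by (intro Min_eqI) auto
  moreover have "Min (wdeg W ` Poly_Mapping.keys h) < m"
  proof -
    have "Min (wdeg W ` Poly_Mapping.keys h) \<le> wdeg W b" by (rule Min_le) (use b in auto)
    then show ?thesis using b by linarith
  qed
  ultimately obtain \<rho> where "\<rho> \<in> Poly_Mapping.keys (g * h)" "wdeg W \<rho> < m"
    using low_key[OF g0 h0, of W] by auto
  then show False using gh by (auto simp: Qs_def)
qed

lemma Qs_prime:
  "prime_ideal n (Qs n W 1 :: 'k::field mpoly set)"
proof -
  have "1 \<notin> (Qs n W 1 :: 'k mpoly set)" by (simp add: Qs_def)
  then have "Qs n W 1 \<noteq> (polys n :: 'k mpoly set)" by auto
  moreover have "\<forall>f\<in>polys n. \<forall>g\<in>polys n. f * g \<in> (Qs n W 1 :: 'k mpoly set) \<longrightarrow> f \<in> Qs n W 1 \<or> g \<in> Qs n W 1"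
  proof (intro ballI impI)
    fix f g :: "'k mpoly" assume "f \<in> polys n" "g \<in> polys n" "f * g \<in> Qs n W 1"
    then show "f \<in> Qs n W 1 \<or> g \<in> Qs n W 1" using Qs_primary[of f n W g 1] by auto
  qed
  ultimately show ?thesis unfolding prime_ideal_def using Qs_ideal by blast
qed

lemma Var_Qs: "finite W \<Longrightarrow> i < n \<Longrightarrow> (Var i :: 'k::field mpoly) \<in> Qs n W 1 \<longleftrightarrow> i \<in> W"
  by (simp add: Qs_def Var_def polys_iff wdeg_single)




definition nx :: "nat \<Rightarrow> nat \<Rightarrow> nat" where "nx n v = (if Suc v = n then 0 else Suc v)"
definition pv :: "nat \<Rightarrow> nat \<Rightarrow> nat" where "pv n v = (if v = 0 then n - 1 else v - 1)"

lemma modS: "v < n \<Longrightarrow> Suc v mod n = nx n v"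
  by (auto simp: mod_if nx_def)

lemma nbhd_eq:
  assumes n: "n \<ge> 3" and v: "v < n"
  shows "closed_nbhd n v = {v, nx n v, pv n v}"
proof -
  have "cycle_adj n v j \<longleftrightarrow> j = nx n v \<or> j = pv n v" for j
  proof
    assume "cycle_adj n v j"
    then have j: "j < n" "v \<noteq> j" "j = Suc v mod n \<or> v = Suc j mod n" by (auto simp: cycle_adj_def)
    then have "j = nx n v \<or> v = nx n j" using v by (simp add: modS)
    then show "j = nx n v \<or> j = pv n v" using j v by (auto simp: nx_def pv_def split: if_splits)
  next
    assume "j = nx n v \<or> j = pv n v"
    then show "cycle_adj n v j" using n v
      by (auto simp: cycle_adj_def modS nx_def pv_def split: if_splits)
  qed
  then show ?thesis by (auto simp: closed_nbhd_def)
qed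

lemma nbhd_card:
  assumes n: "n \<ge> 3" and v: "v < n"
  shows "card (closed_nbhd n v) = 3"
  using n v by (simp add: nbhd_eq nx_def pv_def)

lemma nbhd_sub: "closed_nbhd n v \<subseteq> {..<n} \<union> {v}"
  by (auto simp: closed_nbhd_def cycle_adj_def)

lemma nbhd_finite: "finite (closed_nbhd n v)"
  by (rule finite_subset[OF nbhd_sub]) auto

lemma nbhd_self: "v \<in> closed_nbhd n v"
  by (simp add: closed_nbhd_def)

lemma nbhd_sub_eq:
  assumes n: "n \<ge> 3" "u < n" "v < n" and s: "closed_nbhd n u \<subseteq> closed_nbhd n v"
  shows "closed_nbhd n u = closed_nbhd n v"
  using card_subset_eq[OF nbhd_finite s] nbhd_card[OF n(1) n(2)] nbhd_card[OF n(1) n(3)] by simp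


lemma nbhd_lt: "v < n \<Longrightarrow> closed_nbhd n v \<subseteq> {..<n}"
  using nbhd_sub[of n v] by auto

lemma exists_min_dom:
  "finite S \<Longrightarrow> dominating n S \<Longrightarrow> \<exists>T\<subseteq>S. minimal_dominating n T"
proof (induction "card S" arbitrary: S rule: less_induct)
  case less
  show ?case
  proof (cases "minimal_dominating n S")
    case True then show ?thesis by blast
  next
    case False
    then obtain T where T: "T \<subset> S" "dominating n T" using less.prems by (auto simp: minimal_dominating_def)
    then have "card T < card S" "finite T" using less.prems(1) by (auto intro: psubset_card_mono finite_subset)
    then have "\<exists>T'\<subseteq>T. minimal_dominating n T'" using less.hyps[of T] T by blast
    then show ?thesis using T by blast
  qed
qed

definition ind :: "nat set \<Rightarrow> (nat \<Rightarrow>\<^sub>0 nat)" where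
  "ind D = (\<Sum>i\<in>D. Poly_Mapping.single i 1)"

lemma lookup_ind: "finite D \<Longrightarrow> Poly_Mapping.lookup (ind D) i = (if i \<in> D then 1 else 0)"
proof -
  assume "finite D"
  have "Poly_Mapping.lookup (ind D) i = (\<Sum>j\<in>D. if i = j then 1 else 0)"
    unfolding ind_def lookup_sum by (intro sum.cong) (auto simp: lookup_single)
  also have "\<dots> = (if i \<in> D then 1 else 0)" using \<open>finite D\<close> by (simp add: sum.delta)
  finally show ?thesis .
qed

lemma keys_ind: "finite D \<Longrightarrow> Poly_Mapping.keys (ind D) = D"
  by (auto simp: in_keys_iff lookup_ind split: if_splits)

lemma prod_Var: "finite D \<Longrightarrow> (\<Prod>i\<in>D. Var i) = (mnm (ind D) :: 'k::field mpoly)"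
proof (induction D rule: finite_induct)
  case empty then show ?case by (simp add: ind_def)
next
  case (insert x F)
  then show ?case by (simp add: ind_def Var_def mult_single)
qed

abbreviation DI :: "nat \<Rightarrow> 'k::field mpoly set" where "DI n \<equiv> dominating_ideal_cycle n"

lemma gens_polys: "{(\<Prod>i\<in>S. Var i) | S. minimal_dominating n S} \<subseteq> (polys n :: 'k::field mpoly set)"
proof
  fix p :: "'k mpoly" assume "p \<in> {(\<Prod>i\<in>S. Var i) | S. minimal_dominating n S}"
  then obtain S where S: "minimal_dominating n S" "p = (\<Prod>i\<in>S. Var i)" by blast
  then have "S \<subseteq> {..<n}" by (simp add: minimal_dominating_def dominating_def)
  moreover then have "finite S" by (rule finite_subset) simp
  ultimately show "p \<in> polys n" using S by (simp add: prod_Var polys_single keys_ind)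
qed

lemma DI_ideal: "is_ideal n (DI n)"
  unfolding dominating_ideal_cycle_def by (rule ideal_gen_ideal[OF gens_polys])

lemma min_dom_in: "minimal_dominating n T \<Longrightarrow> (mnm (ind T) :: 'k::field mpoly) \<in> DI n"
proof -
  assume T: "minimal_dominating n T"
  then have "T \<subseteq> {..<n}" by (simp add: minimal_dominating_def dominating_def)
  then have "finite T" by (rule finite_subset) simp
  then have "(mnm (ind T) :: 'k mpoly) \<in> {(\<Prod>i\<in>S. Var i) | S. minimal_dominating n S}"
  proof -
    have "(mnm (ind T) :: 'k mpoly) = (\<Prod>i\<in>T. Var i)" by (rule prod_Var[OF \<open>finite T\<close>, symmetric])
    then show ?thesis using T by blast
  qed
  then show ?thesis unfolding dominating_ideal_cycle_def by (rule subsetD[OF ideal_gen_sub])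
qed

lemma dom_in:
  assumes D: "dominating n D"
  shows "(mnm (ind D) :: 'k::field mpoly) \<in> DI n"
proof -
  have Dn: "D \<subseteq> {..<n}" using D by (simp add: dominating_def)
  then have fD: "finite D" by (rule finite_subset) simp
  obtain T where T: "T \<subseteq> D" "minimal_dominating n T" using exists_min_dom[OF fD D] by blast
  have fT: "finite T" using T(1) fD by (rule finite_subset)
  have le: "Poly_Mapping.lookup (ind T) i \<le> Poly_Mapping.lookup (ind D) i" for i
    using T(1) by (simp add: lookup_ind fD fT subset_iff)
  have k: "Poly_Mapping.keys (ind D) \<subseteq> {..<n}" using Dn by (simp add: keys_ind fD)
  show ?thesis
    by (rule mono_dvd[OF DI_ideal le k min_dom_in[OF T(2)]])
qed

lemma supp_in:
  assumes k: "Poly_Mapping.keys \<mu> \<subseteq> {..<n}" and w: "\<And>v. v < n \<Longrightarrow> 1 \<le> wdeg (closed_nbhd n v) \<mu>"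
  shows "(mnm \<mu> :: 'k::field mpoly) \<in> DI n"
proof -
  have "dominating n (Poly_Mapping.keys \<mu>)"
    unfolding dominating_def
  proof (intro conjI allI impI)
    fix v assume v: "v < n"
    have "1 \<le> (\<Sum>i\<in>closed_nbhd n v. Poly_Mapping.lookup \<mu> i)" using w[OF v] by (simp add: wdeg_def)
    then obtain i where "i \<in> closed_nbhd n v" "Poly_Mapping.lookup \<mu> i \<noteq> 0"
      by (metis not_one_le_zero sum.neutral)
    then show "Poly_Mapping.keys \<mu> \<inter> closed_nbhd n v \<noteq> {}" by (auto simp: in_keys_iff)
  qed (use k in auto)
  then have "(mnm (ind (Poly_Mapping.keys \<mu>)) :: 'k mpoly) \<in> DI n" by (rule dom_in)
  moreover have "Poly_Mapping.lookup (ind (Poly_Mapping.keys \<mu>)) i \<le> Poly_Mapping.lookup \<mu> i" for i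
    by (simp add: lookup_ind in_keys_iff)
  ultimately show ?thesis
    using mono_dvd[OF DI_ideal _ k] by blast
qed

definition Sym :: "nat \<Rightarrow> nat \<Rightarrow> 'k::field mpoly set" where
  "Sym n m = {p \<in> polys n. \<forall>v<n. p \<in> Qs n (closed_nbhd n v) m}"

lemma Sym_ideal: "is_ideal n (Sym n m)"
  using Qs_ideal[of n] unfolding is_ideal_def Sym_def by (auto simp: polys_add polys_mult)

lemma DI_Qs: "v < n \<Longrightarrow> DI n \<subseteq> Qs n (closed_nbhd n v) 1"
  unfolding dominating_ideal_cycle_def
proof (rule ideal_gen_min[OF Qs_ideal], rule)
  fix p :: "'k::field mpoly" assume v: "v < n" and "p \<in> {(\<Prod>i\<in>S. Var i) | S. minimal_dominating n S}"
  then obtain S where S: "minimal_dominating n S" "p = (\<Prod>i\<in>S. Var i)" by blast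
  then have Sn: "S \<subseteq> {..<n}" "dominating n S" by (simp_all add: minimal_dominating_def dominating_def)
  then have fS: "finite S" using Sn(1) by (intro finite_subset[OF Sn(1)]) simp
  obtain i where i: "i \<in> S" "i \<in> closed_nbhd n v" using Sn v by (auto simp: dominating_def)
  have "1 \<le> wdeg (closed_nbhd n v) (ind S)"
  proof -
    have "wdeg (closed_nbhd n v) (ind S) = (\<Sum>j\<in>closed_nbhd n v. if j \<in> S then 1 else 0)"
      by (simp add: wdeg_def lookup_ind fS)
    also have "\<dots> \<ge> (if i \<in> S then 1 else 0)"
      by (rule member_le_sum) (use i nbhd_finite in auto)
    finally show ?thesis using i by simp
  qed
  then show "p \<in> Qs n (closed_nbhd n v) 1"
    using S fS Sn by (simp add: prod_Var Qs_def polys_single keys_ind)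
qed

lemma DI_Sym1: "DI n = (Sym n 1 :: 'k::field mpoly set)"
proof
  show "DI n \<subseteq> (Sym n 1 :: 'k mpoly set)"
    using DI_Qs ideal_polys[OF DI_ideal] unfolding Sym_def by blast
  show "(Sym n 1 :: 'k mpoly set) \<subseteq> DI n"
  proof
    fix p :: "'k mpoly" assume p: "p \<in> Sym n 1"
    show "p \<in> DI n"
    proof (rule ideal_by_monos[OF DI_ideal])
      show "p \<in> polys n" using p by (simp add: Sym_def)
      fix \<mu> assume mu: "\<mu> \<in> Poly_Mapping.keys p"
      show "mnm \<mu> \<in> DI n"
        by (rule supp_in) (use p mu in \<open>auto simp: Sym_def Qs_def polys_iff\<close>)
    qed
  qed
qed

lemma pow_ideal: "is_ideal n I \<Longrightarrow> is_ideal n (ideal_pow n I m)"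
proof (induction m)
  case 0 then show ?case by (simp add: polys_ideal)
next
  case (Suc k)
  have "{f * g | f g. f \<in> I \<and> g \<in> ideal_pow n I k} \<subseteq> polys n"
    using Suc ideal_polys by (blast intro: polys_mult)
  then show ?case by (simp add: ideal_gen_ideal)
qed




definition vt :: "nat \<Rightarrow> nat \<Rightarrow> nat \<Rightarrow> nat" where
  "vt n j p = (if j + p < n then j + p else j + p - n)"
definition pinv :: "nat \<Rightarrow> nat \<Rightarrow> nat \<Rightarrow> nat" where
  "pinv n j t = (if j \<le> t then t - j else t + n - j)"

lemma vt_lt: "j < n \<Longrightarrow> p < n \<Longrightarrow> vt n j p < n" unfolding vt_def by (split if_split) arith
lemma vt_pinv: "j < n \<Longrightarrow> t < n \<Longrightarrow> vt n j (pinv n j t) = t" by (simp add: vt_def pinv_def)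
lemma pinv_lt: "j < n \<Longrightarrow> t < n \<Longrightarrow> pinv n j t < n" unfolding pinv_def by (split if_split) arith
lemma vt_inj: "j < n \<Longrightarrow> p < n \<Longrightarrow> vt n j p = t \<Longrightarrow> p = pinv n j t"
  unfolding vt_def pinv_def by (split if_split_asm if_split; arith)
lemma vt_0: "j < n \<Longrightarrow> vt n j 0 = j" by (simp add: vt_def)
lemma vt_nx: "j < n \<Longrightarrow> Suc p < n \<Longrightarrow> nx n (vt n j p) = vt n j (Suc p)"
  by (auto simp: vt_def nx_def)
lemma vt_nx_last: "j < n \<Longrightarrow> nx n (vt n j (n - 1)) = j"
  by (auto simp: vt_def nx_def)
lemma vt_pv: "j < n \<Longrightarrow> 0 < p \<Longrightarrow> p < n \<Longrightarrow> pv n (vt n j p) = vt n j (p - 1)"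
  by (auto simp: vt_def pv_def)

lemma exists_cm:
  assumes "0 < m" "k < m" shows "\<exists>c. x \<le> c * m + k \<and> c * m + k < x + (m::nat)"
proof -
  have x: "x div m * m + x mod m = x" by (rule div_mult_mod_eq)
  have r: "x mod m < m" using assms by simp
  show ?thesis
  proof (cases "x mod m \<le> k")
    case True then show ?thesis using x assms by (intro exI[of _ "x div m"]) linarith
  next
    case False
    have "(x div m + 1) * m + k = x div m * m + m + k" by (simp add: algebra_simps)
    then show ?thesis using x r assms False by (intro exI[of _ "x div m + 1"]) linarith
  qed
qed

lemma card_res: "card {k. k < m \<and> (\<exists>c. a \<le> c * m + k \<and> c * m + k < a + b)} \<le> (b::nat)"
proof -
  have "{k. k < m \<and> (\<exists>c. a \<le> c * m + k \<and> c * m + k < a + b)} \<subseteq> (\<lambda>e. e mod m) ` {a..<a+b}"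
  proof
    fix k assume "k \<in> {k. k < m \<and> (\<exists>c. a \<le> c * m + k \<and> c * m + k < a + b)}"
    then obtain c where "k < m" "a \<le> c * m + k" "c * m + k < a + b" by blast
    then show "k \<in> (\<lambda>e. e mod m) ` {a..<a+b}" by (intro image_eqI[of _ _ "c * m + k"]) auto
  qed
  then have "card {k. k < m \<and> (\<exists>c. a \<le> c * m + k \<and> c * m + k < a + b)} \<le> card ((\<lambda>e. e mod m) ` {a..<a+b})"
    by (rule card_mono[rotated]) simp
  also have "\<dots> \<le> card {a..<a+b}" by (rule card_image_le) simp
  finally show ?thesis by simp
qed

lemma sum_if_card: "(\<Sum>k<(m::nat). if P k then 1 else (0::nat)) = card {k. k < m \<and> P k}"
proof -
  have "(\<Sum>k<m. if P k then 1 else 0) = (\<Sum>k\<in>{k\<in>{..<m}. P k}. 1)"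
    by (rule sum.inter_filter[symmetric]) simp
  moreover have "{k\<in>{..<m}. P k} = {k. k < m \<and> P k}" by auto
  ultimately show ?thesis by (metis card_eq_sum)
qed


lemma wdeg_nbhd:
  assumes "n \<ge> 3" "v < n"
  shows "wdeg (closed_nbhd n v) \<mu> = Poly_Mapping.lookup \<mu> v + Poly_Mapping.lookup \<mu> (nx n v) + Poly_Mapping.lookup \<mu> (pv n v)"
proof -
  have d: "v \<noteq> nx n v" "v \<noteq> pv n v" "nx n v \<noteq> pv n v" using assms by (auto simp: nx_def pv_def)
  show ?thesis unfolding wdeg_def nbhd_eq[OF assms] using d by simp
qed

lemma prod_in_pow:
  assumes "\<And>k. k < m \<Longrightarrow> F k \<in> J" "is_ideal n J"
  shows "(\<Prod>k<m. F k) \<in> ideal_pow n J m"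
  using assms(1)
proof (induction m)
  case 0 then show ?case by simp
next
  case (Suc m)
  have a: "F m \<in> J" using Suc.prems by simp
  have b: "(\<Prod>k<m. F k) \<in> ideal_pow n J m" using Suc by simp
  have "F m * (\<Prod>k<m. F k) \<in> {f * g | f g. f \<in> J \<and> g \<in> ideal_pow n J m}"
    using a b by blast
  then have "F m * (\<Prod>k<m. F k) \<in> ideal_pow n J (Suc m)"
    by (simp add: subsetD[OF ideal_gen_sub])
  then show ?case by (simp add: mult.commute)
qed

lemma prod_mono: "(\<Prod>k<(m::nat). (mnm (f k) :: 'k::field mpoly)) = mnm (\<Sum>k<m. f k)"
  by (induction m) (simp_all add: mult_single)

lemma Var_pow: "(Var j :: 'k::field mpoly) ^ m = mnm (Poly_Mapping.single j m)"
  by (induction m) (simp_all add: Var_def mult_single single_add[symmetric])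

lemma pow_sub_Sym: "ideal_pow n (DI n) m \<subseteq> (Sym n m :: 'k::field mpoly set)"
proof (induction m)
  case 0 then show ?case by (auto simp: Sym_def Qs_def)
next
  case (Suc m)
  show ?case
  proof (simp, rule ideal_gen_min[OF Sym_ideal], rule)
    fix x :: "'k mpoly" assume "x \<in> {f * g |f g. f \<in> DI n \<and> g \<in> ideal_pow n (DI n) m}"
    then obtain f g where x: "x = f * g" "f \<in> DI n" "g \<in> ideal_pow n (DI n) m" by blast
    have f: "f \<in> Sym n 1" using x(2) DI_Sym1 by blast
    have g: "g \<in> Sym n m" using x(3) Suc by blast
    show "x \<in> Sym n (Suc m)"
      using f g Qs_mult[of f n _ 1 g m] unfolding x(1) Sym_def by (auto simp: polys_mult)
  qed
qed

lemma pow1: "is_ideal n J \<Longrightarrow> ideal_pow n J 1 = J"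
proof -
  assume J: "is_ideal n J"
  have G: "{f * g |f g. f \<in> J \<and> g \<in> polys n} \<subseteq> J" using J by (auto intro: ideal_mult2)
  show ?thesis
  proof
    show "ideal_pow n J 1 \<subseteq> J" using ideal_gen_min[OF J G] by simp
    show "J \<subseteq> ideal_pow n J 1"
    proof
      fix f assume "f \<in> J"
      then have "f * 1 \<in> {f * g |f g. f \<in> J \<and> g \<in> polys n}" using polys_one by blast
      then have "f \<in> {f * g |f g. f \<in> J \<and> g \<in> polys n}" by simp
      then have "f \<in> ideal_gen n {f * g |f g. f \<in> J \<and> g \<in> polys n}" by (rule subsetD[OF ideal_gen_sub])
      then show "f \<in> ideal_pow n J 1" by simp
    qed
  qed
qed


lemma comb:
  assumes n3: "n \<ge> 3" and j: "j < n" and m: "m \<ge> 1" and k: "Poly_Mapping.keys \<mu> \<subseteq> {..<n}"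
    and w: "\<And>v. v < n \<Longrightarrow> m \<le> wdeg (closed_nbhd n v) \<mu>"
  shows "(mnm (\<mu> + Poly_Mapping.single j m) :: 'k::field mpoly) \<in> ideal_pow n (DI n) m"
proof -
  define b where "b p = Poly_Mapping.lookup \<mu> (vt n j p)" for p
  define S where "S p = (\<Sum>q<p. b q)" for p
  have SS: "S (Suc p) = S p + b p" for p by (simp add: S_def)
  define D where "D k = insert j {vt n j p | p. 0 < p \<and> p < n \<and> (\<exists>c. S p \<le> c * m + k \<and> c * m + k < S (Suc p))}" for k
  have Dsub: "D k \<subseteq> {..<n}" for k using j vt_lt[OF j] by (auto simp: D_def)
  have fin: "finite (D k)" for k by (rule finite_subset[OF Dsub]) simp
  have dom: "dominating n (D k)" if km: "k < m" for k
    unfolding dominating_def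
  proof (intro conjI allI impI)
    show "D k \<subseteq> {..<n}" by (rule Dsub)
    fix v assume v: "v < n"
    show "D k \<inter> closed_nbhd n v \<noteq> {}"
    proof (cases "j \<in> closed_nbhd n v")
      case True then show ?thesis by (auto simp: D_def)
    next
      case False
      have W: "closed_nbhd n v = {v, nx n v, pv n v}" by (rule nbhd_eq[OF n3 v])
      define p where "p = pinv n j v"
      have pn: "p < n" and vp: "vt n j p = v" using pinv_lt[OF j v] vt_pinv[OF j v] by (simp_all add: p_def)
      have mv: "v \<in> closed_nbhd n v" and mnx: "nx n v \<in> closed_nbhd n v" and mpv: "pv n v \<in> closed_nbhd n v"
        by (simp_all add: W)
      have p0: "p \<noteq> 0"
      proof
        assume "p = 0"
        then have "v = j" using vp vt_0[OF j] by simp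
        then show False using False mv by simp
      qed
      have p1: "p \<noteq> 1"
      proof
        assume "p = 1"
        then have "pv n v = j" using vt_pv[OF j, of p] pn vp vt_0[OF j] by simp
        then show False using False mpv by simp
      qed
      have pl: "p \<noteq> n - 1"
      proof
        assume "p = n - 1"
        then have "nx n v = j" using vt_nx_last[OF j] vp by simp
        then show False using False mnx by simp
      qed
      define p' where "p' = p - 1"
      have pp': "p = Suc p'" "0 < p'" "Suc (Suc p') < n" using p0 p1 pl pn by (auto simp: p'_def)
      have vpv: "vt n j p' = pv n v" using vt_pv[OF j, of p] pn p0 vp by (simp add: p'_def)
      have vnx: "vt n j (Suc p) = nx n v" using vt_nx[OF j, of p] pp' vp by simp
      have "m \<le> b p' + b p + b (Suc p)"
        using w[OF v] wdeg_nbhd[OF n3 v, of \<mu>] vpv vnx vp by (simp add: b_def)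
      then have len: "S p' + m \<le> S (Suc (Suc (Suc p')))" using pp' by (simp add: SS)
      obtain c where c: "S p' \<le> c * m + k" "c * m + k < S p' + m" using exists_cm[of m k "S p'"] m km by auto
      define e where "e = c * m + k"
      have "\<exists>q. (q = p' \<or> q = p \<or> q = Suc p) \<and> S q \<le> e \<and> e < S (Suc q)"
      proof (cases "e < S (Suc p')")
        case True then show ?thesis using c by (auto simp: e_def)
      next
        case F1: False
        show ?thesis
        proof (cases "e < S (Suc (Suc p'))")
          case True then show ?thesis using F1 pp' by (intro exI[of _ p]) auto
        next
          case False then show ?thesis using c len pp' by (intro exI[of _ "Suc p"]) (auto simp: e_def)
        qed
      qed
      then obtain q where q: "q = p' \<or> q = p \<or> q = Suc p" "S q \<le> e" "e < S (Suc q)" by blast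
      have q0: "0 < q" "q < n" using q(1) pp' by auto
      have "vt n j q \<in> D k" unfolding D_def using q q0 by (auto simp: e_def)
      moreover have "vt n j q \<in> closed_nbhd n v" using q(1) mv mnx mpv vpv vp vnx by auto
      ultimately show ?thesis by blast
    qed
  qed
  define E where "E = (\<Sum>k<m. ind (D k))"
  have "(\<Prod>k<m. (mnm (ind (D k)) :: 'k mpoly)) \<in> ideal_pow n (DI n) m"
    by (rule prod_in_pow[OF _ DI_ideal]) (rule dom_in[OF dom])
  then have EinP: "(mnm E :: 'k mpoly) \<in> ideal_pow n (DI n) m" by (simp add: prod_mono E_def)
  have lookE: "Poly_Mapping.lookup E t = (\<Sum>k<m. if t \<in> D k then 1 else 0)" for t
    by (simp add: E_def lookup_sum lookup_ind fin)
  have le: "Poly_Mapping.lookup E t \<le> Poly_Mapping.lookup (\<mu> + Poly_Mapping.single j m) t" for t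
  proof (cases "t = j")
    case True
    have "(\<Sum>k<m. if t \<in> D k then 1 else 0) \<le> (\<Sum>k<m. (1::nat))" by (rule sum_mono) simp
    then show ?thesis using True by (simp add: lookE lookup_add)
  next
    case tj: False
    show ?thesis
    proof (cases "t < n")
      case False
      then have "t \<notin> D k" for k using Dsub by auto
      then show ?thesis by (simp add: lookE)
    next
      case True
      define p where "p = pinv n j t"
      have "t \<in> D k \<Longrightarrow> (\<exists>c. S p \<le> c * m + k \<and> c * m + k < S p + b p)" for k
      proof -
        assume "t \<in> D k"
        then obtain p2 where p2: "t = vt n j p2" "p2 < n" "\<exists>c. S p2 \<le> c * m + k \<and> c * m + k < S (Suc p2)"
          using tj by (auto simp: D_def)
        have "p2 = p" using vt_inj[OF j p2(2) p2(1)[symmetric]] by (simp add: p_def)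
        then show ?thesis using p2(3) by (simp add: SS)
      qed
      then have "(\<Sum>k<m. if t \<in> D k then 1 else 0) \<le> (\<Sum>k<m. if (\<exists>c. S p \<le> c * m + k \<and> c * m + k < S p + b p) then 1 else (0::nat))"
        by (intro sum_mono) auto
      also have "\<dots> = card {k. k < m \<and> (\<exists>c. S p \<le> c * m + k \<and> c * m + k < S p + b p)}"
        by (rule sum_if_card)
      also have "\<dots> \<le> b p" by (rule card_res)
      also have "b p = Poly_Mapping.lookup \<mu> t" using vt_pinv[OF j True] by (simp add: b_def p_def)
      finally show ?thesis using tj by (simp add: lookE lookup_add lookup_single)
    qed
  qed
  have keys: "Poly_Mapping.keys (\<mu> + Poly_Mapping.single j m) \<subseteq> {..<n}"
    using k j by (auto simp: keys_add_nat)
  show ?thesis by (rule mono_dvd[OF pow_ideal[OF DI_ideal] le keys EinP])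
qed




lemma Sym_pow:
  assumes n3: "n \<ge> 3" and j: "j < n" and m: "m \<ge> 1" and p: "p \<in> Sym n m"
  shows "(Var j :: 'k::field mpoly) ^ m * p \<in> ideal_pow n (DI n) m"
proof -
  define J where "J = {q \<in> polys n. (Var j :: 'k mpoly) ^ m * q \<in> ideal_pow n (DI n) m}"
  have PI: "is_ideal n (ideal_pow n (DI n :: 'k mpoly set) m)" by (rule pow_ideal[OF DI_ideal])
  have J: "is_ideal n J"
    unfolding is_ideal_def
  proof (intro conjI ballI)
    show "J \<subseteq> polys n" by (auto simp: J_def)
    show "0 \<in> J" using PI by (simp add: J_def is_ideal_def)
    fix f g :: "'k mpoly" assume f: "f \<in> J" and g: "g \<in> J"
    then show "f + g \<in> J" using PI by (simp add: J_def is_ideal_def polys_add distrib_left)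
  next
    fix f r :: "'k mpoly" assume f: "f \<in> J" and r: "r \<in> polys n"
    have e: "(Var j :: 'k mpoly) ^ m * (r * f) = r * ((Var j) ^ m * f)" by (simp add: algebra_simps)
    have "r * ((Var j) ^ m * f) \<in> ideal_pow n (DI n) m"
      by (rule ideal_mult[OF PI r]) (use f in \<open>simp add: J_def\<close>)
    then have "(Var j :: 'k mpoly) ^ m * (r * f) \<in> ideal_pow n (DI n) m" by (simp only: e)
    then show "r * f \<in> J" using f r by (simp add: J_def polys_mult)
  qed
  have "p \<in> J"
  proof (rule ideal_by_monos[OF J])
    show pp: "p \<in> polys n" using p by (simp add: Sym_def)
    fix \<mu> assume mu: "\<mu> \<in> Poly_Mapping.keys p"
    have k: "Poly_Mapping.keys \<mu> \<subseteq> {..<n}" using pp mu by (simp add: polys_iff)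
    have w: "m \<le> wdeg (closed_nbhd n v) \<mu>" if "v < n" for v
      using p mu that by (auto simp: Sym_def Qs_def)
    have "(Var j :: 'k mpoly) ^ m * mnm \<mu> = mnm (\<mu> + Poly_Mapping.single j m)"
      by (simp add: Var_pow mult_single add.commute)
    then show "mnm \<mu> \<in> J" using comb[OF n3 j m k w] k by (simp add: J_def polys_single)
  qed
  then show ?thesis by (simp add: J_def)
qed

lemma Qs_gen:
  assumes W: "W \<subseteq> {..<n}"
  shows "ideal_gen n {Var i | i. i \<in> W} = (Qs n W 1 :: 'k::field mpoly set)"
proof
  have fW: "finite W" using W by (rule finite_subset) simp
  show "ideal_gen n {Var i | i. i \<in> W} \<subseteq> (Qs n W 1 :: 'k mpoly set)"
    by (rule ideal_gen_min[OF Qs_ideal]) (use Var_Qs[OF fW] W in auto)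
  have GP: "{Var i | i. i \<in> W} \<subseteq> (polys n :: 'k mpoly set)" using W Var_polys by auto
  show "(Qs n W 1 :: 'k mpoly set) \<subseteq> ideal_gen n {Var i | i. i \<in> W}"
  proof
    fix p :: "'k mpoly" assume p: "p \<in> Qs n W 1"
    show "p \<in> ideal_gen n {Var i | i. i \<in> W}"
    proof (rule ideal_by_monos[OF ideal_gen_ideal[OF GP]])
      show pp: "p \<in> polys n" using p by (simp add: Qs_def)
      fix \<mu> assume mu: "\<mu> \<in> Poly_Mapping.keys p"
      have "1 \<le> wdeg W \<mu>" using p mu by (simp add: Qs_def)
      then obtain i where i: "i \<in> W" "Poly_Mapping.lookup \<mu> i \<noteq> 0"
        unfolding wdeg_def by (metis not_one_le_zero sum.neutral)
      have k: "Poly_Mapping.keys \<mu> \<subseteq> {..<n}" using pp mu by (simp add: polys_iff)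
      have "(Var i :: 'k mpoly) \<in> ideal_gen n {Var i | i. i \<in> W}"
        using i(1) by (intro subsetD[OF ideal_gen_sub]) blast
      then have vi: "(mnm (Poly_Mapping.single i 1) :: 'k mpoly) \<in> ideal_gen n {Var i | i. i \<in> W}"
        by (simp add: Var_def)
      have le: "Poly_Mapping.lookup (Poly_Mapping.single i 1) l \<le> Poly_Mapping.lookup \<mu> l" for l
        using i(2) by (auto simp: lookup_single when_def)
      show "(mnm \<mu> :: 'k mpoly) \<in> ideal_gen n {Var i | i. i \<in> W}"
        using mono_dvd[OF ideal_gen_ideal[OF GP] le k vi] by simp
    qed
  qed
qed

lemma Qs_sub_ideal:
  assumes W: "W \<subseteq> {..<n}" and Q: "is_ideal n Q" and v: "\<And>i. i \<in> W \<Longrightarrow> (Var i :: 'k::field mpoly) \<in> Q"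
  shows "(Qs n W 1 :: 'k mpoly set) \<subseteq> Q"
  unfolding Qs_gen[OF W, symmetric] by (rule ideal_gen_min[OF Q]) (use v in auto)

lemma prime_one: "prime_ideal n (Q :: 'k::field mpoly set) \<Longrightarrow> 1 \<notin> Q"
proof
  assume P: "prime_ideal n Q" and o: "1 \<in> Q"
  have "polys n \<subseteq> Q"
  proof
    fix r :: "'k mpoly" assume "r \<in> polys n"
    moreover have "is_ideal n Q" using P by (simp add: prime_ideal_def)
    ultimately have "r * 1 \<in> Q" using o by (intro ideal_mult)
    then show "r \<in> Q" by simp
  qed
  then show False using P by (auto simp: prime_ideal_def is_ideal_def)
qed

lemma polys_prod: "(\<And>a. a \<in> A \<Longrightarrow> F a \<in> polys n) \<Longrightarrow> prod F A \<in> polys n"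
  by (induction A rule: infinite_finite_induct) (auto intro: polys_mult)

lemma prime_prod:
  assumes P: "prime_ideal n Q" and F: "\<And>a. a \<in> A \<Longrightarrow> F a \<in> polys n" and fA: "finite A"
    and pr: "prod F A \<in> Q"
  shows "\<exists>a\<in>A. F a \<in> Q"
  using fA F pr
proof (induction A rule: finite_induct)
  case empty then show ?case using prime_one[OF P] by simp
next
  case (insert x A)
  then have "F x * prod F A \<in> Q" by simp
  moreover have "F x \<in> polys n" "prod F A \<in> polys n" using insert.prems by (auto intro: polys_prod)
  ultimately have "F x \<in> Q \<or> prod F A \<in> Q" using P by (simp add: prime_ideal_def)
  then show ?case using insert by auto
qed

lemma prime_pow: "prime_ideal n Q \<Longrightarrow> x \<in> polys n \<Longrightarrow> x ^ m \<in> Q \<Longrightarrow> x \<in> Q"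
  using prime_prod[of n Q "{..<m}" "\<lambda>_. x"] by auto


lemma prime_ideal_is: "prime_ideal n Q \<Longrightarrow> is_ideal n Q"
  by (simp add: prime_ideal_def)

lemma prime_contains:
  assumes n3: "n \<ge> 3" and P: "prime_ideal n (Q :: 'k::field mpoly set)" and DQ: "DI n \<subseteq> Q"
  shows "\<exists>u<n. (Qs n (closed_nbhd n u) 1 :: 'k mpoly set) \<subseteq> Q"
proof -
  define S where "S = {i. i < n \<and> (Var i :: 'k mpoly) \<notin> Q}"
  have Sn: "S \<subseteq> {..<n}" by (auto simp: S_def)
  have fS: "finite S" by (rule finite_subset[OF Sn]) simp
  show ?thesis
  proof (cases "dominating n S")
    case True
    obtain T where T: "T \<subseteq> S" "minimal_dominating n T" using exists_min_dom[OF fS True] by blast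
    have fT: "finite T" using T(1) fS by (rule finite_subset)
    have "(mnm (ind T) :: 'k mpoly) \<in> Q" using min_dom_in[OF T(2)] DQ by blast
    then have "(\<Prod>i\<in>T. (Var i :: 'k mpoly)) \<in> Q" by (simp add: prod_Var[OF fT])
    moreover have "\<And>i. i \<in> T \<Longrightarrow> (Var i :: 'k mpoly) \<in> polys n" using T(1) Sn by (auto intro: Var_polys)
    ultimately obtain i where "i \<in> T" "(Var i :: 'k mpoly) \<in> Q" using prime_prod[OF P _ fT] by blast
    then show ?thesis using T(1) by (auto simp: S_def)
  next
    case False
    then obtain v where v: "v < n" "S \<inter> closed_nbhd n v = {}" using Sn by (auto simp: dominating_def)
    have "\<And>i. i \<in> closed_nbhd n v \<Longrightarrow> (Var i :: 'k mpoly) \<in> Q"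
      using v nbhd_lt[OF v(1)] by (auto simp: S_def)
    then have "(Qs n (closed_nbhd n v) 1 :: 'k mpoly set) \<subseteq> Q"
      by (intro Qs_sub_ideal[OF nbhd_lt[OF v(1)] prime_ideal_is[OF P]])
    then show ?thesis using v(1) by blast
  qed
qed

lemma Qs_mono_nbhd:
  assumes n3: "n \<ge> 3" "u < n" "v < n"
    and s: "(Qs n (closed_nbhd n u) 1 :: 'k::field mpoly set) \<subseteq> Qs n (closed_nbhd n v) 1"
  shows "closed_nbhd n u = closed_nbhd n v"
proof (rule nbhd_sub_eq[OF n3])
  show "closed_nbhd n u \<subseteq> closed_nbhd n v"
  proof
    fix i assume i: "i \<in> closed_nbhd n u"
    then have "i < n" using nbhd_lt[OF n3(2)] by auto
    then have "(Var i :: 'k mpoly) \<in> Qs n (closed_nbhd n u) 1" using Var_Qs[OF nbhd_finite] i by blast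
    then have "(Var i :: 'k mpoly) \<in> Qs n (closed_nbhd n v) 1" using s by blast
    then show "i \<in> closed_nbhd n v" using Var_Qs[OF nbhd_finite] \<open>i < n\<close> by blast
  qed
qed

lemma minW:
  assumes n3: "n \<ge> 3" and v: "v < n"
  shows "(Qs n (closed_nbhd n v) 1 :: 'k::field mpoly set) \<in> minprimes n (DI n)"
  unfolding minprimes_def
proof (intro CollectI conjI allI impI)
  show "prime_ideal n (Qs n (closed_nbhd n v) 1 :: 'k mpoly set)" by (rule Qs_prime)
  show "DI n \<subseteq> (Qs n (closed_nbhd n v) 1 :: 'k mpoly set)" by (rule DI_Qs[OF v])
  fix Q :: "'k mpoly set"
  assume Q: "prime_ideal n Q \<and> DI n \<subseteq> Q \<and> Q \<subseteq> Qs n (closed_nbhd n v) 1"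
  obtain u where u: "u < n" "(Qs n (closed_nbhd n u) 1 :: 'k mpoly set) \<subseteq> Q"
    using prime_contains[OF n3, of Q] Q by blast
  then have "closed_nbhd n u = closed_nbhd n v" using Q by (intro Qs_mono_nbhd[OF n3 u(1) v]) blast
  then show "Q = Qs n (closed_nbhd n v) 1" using u Q by auto
qed

lemma minprimes_char:
  assumes n3: "n \<ge> 3" and Q: "(Q :: 'k::field mpoly set) \<in> minprimes n (DI n)"
  shows "\<exists>u<n. Q = Qs n (closed_nbhd n u) 1"
proof -
  have Qp: "prime_ideal n Q" "DI n \<subseteq> Q" using Q by (auto simp: minprimes_def)
  obtain u where u: "u < n" "(Qs n (closed_nbhd n u) 1 :: 'k mpoly set) \<subseteq> Q"
    using prime_contains[OF n3 Qp] by blast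
  have "(Qs n (closed_nbhd n u) 1 :: 'k mpoly set) \<in> minprimes n (DI n)" by (rule minW[OF n3 u(1)])
  then have "prime_ideal n (Qs n (closed_nbhd n u) 1 :: 'k mpoly set)" "DI n \<subseteq> (Qs n (closed_nbhd n u) 1 :: 'k mpoly set)"
    by (auto simp: minprimes_def)
  then have "Qs n (closed_nbhd n u) 1 = Q" using Q u(2) unfolding minprimes_def by blast
  then show ?thesis using u(1) by blast
qed


lemma core:
  assumes n3: "n \<ge> 3" and m: "m \<ge> 1" and P: "prime_ideal n (P :: 'k::field mpoly set)"
    and h: "h \<in> polys n" and Peq: "P = {g \<in> polys n. g * h \<in> Sym n m}"
  shows "\<exists>v<n. P = Qs n (closed_nbhd n v) 1"
proof -
  have step1: "\<exists>v<n. \<forall>g\<in>polys n. g * h \<in> Qs n (closed_nbhd n v) m \<longrightarrow> g \<in> P"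
  proof (rule ccontr)
    assume "\<not> ?thesis"
    then have "\<forall>v<n. \<exists>a. a \<in> polys n \<and> a * h \<in> Qs n (closed_nbhd n v) m \<and> a \<notin> P" by blast
    then obtain a where a: "\<And>v. v < n \<Longrightarrow> a v \<in> polys n \<and> a v * h \<in> Qs n (closed_nbhd n v) m \<and> a v \<notin> P"
      by metis
    define A where "A = (\<Prod>v<n. a v)"
    have Apol: "A \<in> polys n" unfolding A_def by (rule polys_prod) (use a in auto)
    have "A * h \<in> Qs n (closed_nbhd n u) m" if u: "u < n" for u
    proof -
      have "A = a u * (\<Prod>v\<in>{..<n} - {u}. a v)" unfolding A_def using u by (simp add: prod.remove)
      then have e: "A * h = (\<Prod>v\<in>{..<n} - {u}. a v) * (a u * h)" by (simp add: algebra_simps)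
      have pr: "(\<Prod>v\<in>{..<n} - {u}. a v) \<in> polys n" by (rule polys_prod) (use a in auto)
      have au: "a u * h \<in> Qs n (closed_nbhd n u) m" using a[OF u] by blast
      show ?thesis unfolding e by (rule ideal_mult[OF Qs_ideal pr au])
    qed
    then have "A * h \<in> Sym n m" using Apol h by (simp add: Sym_def polys_mult)
    then have "A \<in> P" using Apol Peq by blast
    then obtain v where "v \<in> {..<n}" "a v \<in> P"
      using prime_prod[OF P, of "{..<n}" a] a unfolding A_def by auto
    then show False using a by auto
  qed
  then obtain v where v: "v < n" and s1: "\<forall>g\<in>polys n. g * h \<in> Qs n (closed_nbhd n v) m \<longrightarrow> g \<in> P" by blast
  have J: "P = {g \<in> polys n. g * h \<in> Qs n (closed_nbhd n v) m}"
    using s1 v Peq by (auto simp: Sym_def)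
  have "(Qs n (closed_nbhd n v) 1 :: 'k mpoly set) \<subseteq> P"
  proof (rule Qs_sub_ideal[OF nbhd_lt[OF v] prime_ideal_is[OF P]])
    fix i assume i: "i \<in> closed_nbhd n v"
    then have iN: "i < n" using nbhd_lt[OF v] by auto
    have "(Var i :: 'k mpoly) ^ m \<in> Qs n (closed_nbhd n v) m"
      using i iN by (simp add: Var_pow Qs_def polys_iff wdeg_single nbhd_finite)
    moreover have "h \<in> Qs n (closed_nbhd n v) 0" using h by (simp add: Qs_def)
    ultimately have "(Var i :: 'k mpoly) ^ m * h \<in> Qs n (closed_nbhd n v) (m + 0)" by (rule Qs_mult)
    moreover have "(Var i :: 'k mpoly) ^ m \<in> polys n" using iN by (simp add: Var_pow polys_single)
    ultimately have "(Var i :: 'k mpoly) ^ m \<in> P" using J by simp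
    then show "(Var i :: 'k mpoly) \<in> P" using prime_pow[OF P Var_polys[OF iN]] by blast
  qed
  moreover have "P \<subseteq> Qs n (closed_nbhd n v) 1"
  proof
    fix g assume g: "g \<in> P"
    show "g \<in> Qs n (closed_nbhd n v) 1"
    proof (rule ccontr)
      assume ng: "g \<notin> Qs n (closed_nbhd n v) 1"
      have "1 \<notin> P" by (rule prime_one[OF P])
      then have "h \<notin> Qs n (closed_nbhd n v) m" using J by auto
      moreover have gp: "g \<in> polys n" using g J by auto
      ultimately have "g * h \<notin> Qs n (closed_nbhd n v) m" using Qs_primary[OF ng _ gp h] by blast
      then show False using g J by auto
    qed
  qed
  ultimately show ?thesis using v by blast
qed

lemma colon:
  assumes n3: "n \<ge> 3" and u: "u < n"
  defines "f \<equiv> (mnm (ind ({..<n} - closed_nbhd n u)) :: 'k::field mpoly)"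
  shows "f \<in> polys n" "(Qs n (closed_nbhd n u) 1 :: 'k mpoly set) = {g \<in> polys n. g * f \<in> Sym n 1}"
proof -
  define F where "F = {..<n} - closed_nbhd n u"
  have fF: "finite F" by (simp add: F_def)
  show fp: "f \<in> polys n" unfolding f_def F_def[symmetric] using fF by (intro polys_single) (auto simp: keys_ind F_def)
  have fnot: "f \<notin> Qs n (closed_nbhd n u) 1"
  proof -
    have "wdeg (closed_nbhd n u) (ind F) = 0"
      unfolding wdeg_def by (rule sum.neutral) (simp add: lookup_ind fF F_def)
    then show ?thesis unfolding f_def F_def[symmetric] by (simp add: Qs_def)
  qed
  have fother: "f \<in> Qs n (closed_nbhd n v) 1" if v: "v < n" and ne: "closed_nbhd n v \<noteq> closed_nbhd n u" for v
  proof -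
    obtain i where i: "i \<in> closed_nbhd n v" "i \<notin> closed_nbhd n u"
      using nbhd_sub_eq[OF n3 v u] ne by blast
    have iF: "i \<in> F" using i nbhd_lt[OF v] by (auto simp: F_def)
    have "Poly_Mapping.lookup (ind F) i \<le> wdeg (closed_nbhd n v) (ind F)"
      unfolding wdeg_def by (rule member_le_sum) (use i nbhd_finite in auto)
    then have "1 \<le> wdeg (closed_nbhd n v) (ind F)" using iF fF by (simp add: lookup_ind)
    then show ?thesis using fp unfolding f_def F_def[symmetric] by (simp add: Qs_def)
  qed
  show "(Qs n (closed_nbhd n u) 1 :: 'k mpoly set) = {g \<in> polys n. g * f \<in> Sym n 1}"
  proof
    show "Qs n (closed_nbhd n u) 1 \<subseteq> {g \<in> polys n. g * f \<in> Sym n 1}"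
    proof
      fix g :: "'k mpoly" assume g: "g \<in> Qs n (closed_nbhd n u) 1"
      have gp: "g \<in> polys n" using g by (simp add: Qs_def)
      have "g * f \<in> Qs n (closed_nbhd n v) 1" if v: "v < n" for v
      proof (cases "closed_nbhd n v = closed_nbhd n u")
        case True then show ?thesis using g fp by (simp add: ideal_mult2[OF Qs_ideal])
      next
        case False then show ?thesis using fother[OF v] gp by (simp add: ideal_mult[OF Qs_ideal])
      qed
      then show "g \<in> {g \<in> polys n. g * f \<in> Sym n 1}" using gp fp by (simp add: Sym_def polys_mult)
    qed
    show "{g \<in> polys n. g * f \<in> Sym n 1} \<subseteq> Qs n (closed_nbhd n u) 1"
    proof
      fix g :: "'k mpoly" assume "g \<in> {g \<in> polys n. g * f \<in> Sym n 1}"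
      then have gp: "g \<in> polys n" and "g * f \<in> Qs n (closed_nbhd n u) 1" using u by (auto simp: Sym_def)
      then show "g \<in> Qs n (closed_nbhd n u) 1"
        using Qs_prime[of n "closed_nbhd n u"] fp fnot by (auto simp: prime_ideal_def)
    qed
  qed
qed


lemma wdeg_all_pos:
  assumes "Poly_Mapping.keys \<mu> \<subseteq> {..<n}" "\<mu> \<noteq> 0"
  shows "1 \<le> wdeg {..<n} \<mu>"
proof -
  obtain i where i: "Poly_Mapping.lookup \<mu> i \<noteq> 0"
    using assms(2) by (metis poly_mapping_eqI lookup_zero)
  then have "i \<in> Poly_Mapping.keys \<mu>" by (simp add: in_keys_iff)
  then have iN: "i < n" using assms(1) by auto
  have "Poly_Mapping.lookup \<mu> i \<le> wdeg {..<n} \<mu>"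
    unfolding wdeg_def by (rule member_le_sum) (use iN in auto)
  then show ?thesis using i by linarith
qed

lemma maximal:
  assumes P: "prime_ideal n (P :: 'k::field mpoly set)" and M: "Qs n {..<n} 1 \<subseteq> P"
  shows "P \<subseteq> Qs n {..<n} 1"
proof
  fix g assume g: "g \<in> P"
  have I: "is_ideal n P" using P by (rule prime_ideal_is)
  have gp: "g \<in> polys n" using g I by (rule ideal_polys[rotated])
  show "g \<in> Qs n {..<n} 1"
  proof (rule ccontr)
    assume ng: "g \<notin> Qs n {..<n} 1"
    then obtain \<mu> where mu: "\<mu> \<in> Poly_Mapping.keys g" "wdeg {..<n} \<mu> < 1" using gp by (auto simp: Qs_def)
    have "\<mu> = 0" using wdeg_all_pos[of \<mu> n] mu gp by (auto simp: polys_iff)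
    then have c: "Poly_Mapping.lookup g 0 \<noteq> 0" using mu by (simp add: in_keys_iff)
    define c where "c = Poly_Mapping.lookup g 0"
    define g1 where "g1 = restr (\<lambda>\<mu>. \<not> \<mu> = 0) g"
    have split: "g = Poly_Mapping.single 0 c + g1"
      unfolding g1_def c_def by (rule poly_mapping_eqI) (simp add: lookup_add lookup_restr lookup_single when_def)
    have g1Q: "g1 \<in> Qs n {..<n} 1"
      using gp wdeg_all_pos[of _ n] by (auto simp: g1_def Qs_def polys_iff keys_restr)
    then have g1P: "g1 \<in> P" using M by blast
    have "Poly_Mapping.single 0 (-1) * g1 \<in> P" by (rule ideal_mult[OF I polys_single0 g1P])
    then have "g + Poly_Mapping.single 0 (-1) * g1 \<in> P"
      using I g by (simp add: is_ideal_def)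
    moreover have "g + Poly_Mapping.single 0 (-1) * g1 = Poly_Mapping.single 0 c"
      by (subst split) (simp add: mult_single single_uminus)
    ultimately have cP: "Poly_Mapping.single 0 c \<in> P" by simp
    have "Poly_Mapping.single 0 (inverse c) * Poly_Mapping.single 0 c \<in> P"
      by (rule ideal_mult[OF I polys_single0 cP])
    then have "1 \<in> P" using c by (simp add: mult_single c_def)
    then show False using prime_one[OF P] by simp
  qed
qed


theorem theorem3p9:
  fixes n :: nat
  assumes "n \<ge> 3"
  shows "nearly_normally_torsion_free n (dominating_ideal_cycle n :: 'k::field mpoly set)"
proof -
  note n3 = assms
  define M where "M = (Qs n {..<n} 1 :: 'k mpoly set)"
  have Mmon: "monomial_ideal n M"
    unfolding monomial_ideal_def
  proof (intro exI conjI ballI)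
    show "M = ideal_gen n {Var i | i. i \<in> {..<n}}" unfolding M_def by (rule Qs_gen[symmetric]) simp
    fix g :: "'k mpoly" assume "g \<in> {Var i | i. i \<in> {..<n}}"
    then obtain i where "g = Var i" "i < n" by blast
    then show "is_monomial n g" unfolding is_monomial_def Var_def
      by (intro exI[of _ "Poly_Mapping.single i 1"]) simp
  qed
  have Mprime: "prime_ideal n M" unfolding M_def by (rule Qs_prime)
  have A1: "Ass n (ideal_pow n (DI n) 1) = (minprimes n (DI n) :: 'k mpoly set set)"
  proof
    show "Ass n (ideal_pow n (DI n) 1) \<subseteq> (minprimes n (DI n) :: 'k mpoly set set)"
    proof
      fix P :: "'k mpoly set" assume "P \<in> Ass n (ideal_pow n (DI n) 1)"
      then have "P \<in> Ass n (DI n)" unfolding pow1[OF DI_ideal] .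
      then obtain f where P: "prime_ideal n P" "f \<in> polys n" "P = {g \<in> polys n. g * f \<in> DI n}"
        by (auto simp: Ass_def)
      then have "P = {g \<in> polys n. g * f \<in> Sym n 1}" by (simp add: DI_Sym1)
      then obtain v where "v < n" "P = Qs n (closed_nbhd n v) 1" using core[OF n3 _ P(1) P(2)] by auto
      then show "P \<in> minprimes n (DI n)" using minW[OF n3] by blast
    qed
    show "(minprimes n (DI n) :: 'k mpoly set set) \<subseteq> Ass n (ideal_pow n (DI n) 1)"
    proof
      fix Q :: "'k mpoly set" assume "Q \<in> minprimes n (DI n)"
      then obtain u where u: "u < n" "Q = Qs n (closed_nbhd n u) 1" using minprimes_char[OF n3] by blast
      note c = colon[OF n3 u(1), where 'k = 'k]
      have "Q \<in> Ass n (DI n)"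
        unfolding Ass_def DI_Sym1 using u(2) c Qs_prime by blast
      then show "Q \<in> Ass n (ideal_pow n (DI n) 1)" unfolding pow1[OF DI_ideal] .
    qed
  qed
  have A2: "Ass n (ideal_pow n (DI n) m) \<subseteq> minprimes n (DI n) \<union> {M}" if m: "m \<ge> 1" for m
  proof
    fix P :: "'k mpoly set" assume "P \<in> Ass n (ideal_pow n (DI n) m)"
    then obtain f where P: "prime_ideal n P" "f \<in> polys n" "P = {g \<in> polys n. g * f \<in> ideal_pow n (DI n) m}"
      by (auto simp: Ass_def)
    have PI: "is_ideal n (ideal_pow n (DI n :: 'k mpoly set) m)" by (rule pow_ideal[OF DI_ideal])
    show "P \<in> minprimes n (DI n) \<union> {M}"
    proof (cases "\<forall>j<n. (Var j :: 'k mpoly) \<in> P")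
      case True
      have "M \<subseteq> P" unfolding M_def
        by (rule Qs_sub_ideal[OF _ prime_ideal_is[OF P(1)]]) (use True in auto)
      moreover have "P \<subseteq> M" unfolding M_def by (rule maximal[OF P(1)]) (use \<open>M \<subseteq> P\<close> M_def in simp)
      ultimately show ?thesis by auto
    next
      case False
      then obtain j where j: "j < n" "(Var j :: 'k mpoly) \<notin> P" by blast
      have Vp: "(Var j :: 'k mpoly) ^ k \<in> polys n" for k using j by (simp add: Var_pow polys_single)
      define h where "h = (Var j :: 'k mpoly) ^ m * f"
      have hp: "h \<in> polys n" unfolding h_def by (rule polys_mult[OF Vp P(2)])
      have "P = {g \<in> polys n. g * h \<in> Sym n m}"
      proof
        show "P \<subseteq> {g \<in> polys n. g * h \<in> Sym n m}"
        proof
          fix g assume g: "g \<in> P"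
          then have gp: "g \<in> polys n" and gf: "g * f \<in> ideal_pow n (DI n) m" using P(3) by auto
          have "(Var j :: 'k mpoly) ^ m * (g * f) \<in> ideal_pow n (DI n) m" by (rule ideal_mult[OF PI Vp gf])
          moreover have "(Var j :: 'k mpoly) ^ m * (g * f) = g * h" by (simp add: h_def algebra_simps)
          ultimately have "g * h \<in> ideal_pow n (DI n) m" by simp
          then show "g \<in> {g \<in> polys n. g * h \<in> Sym n m}" using gp pow_sub_Sym by blast
        qed
        show "{g \<in> polys n. g * h \<in> Sym n m} \<subseteq> P"
        proof
          fix g assume "g \<in> {g \<in> polys n. g * h \<in> Sym n m}"
          then have gp: "g \<in> polys n" and gh: "g * h \<in> Sym n m" by auto
          have "(Var j :: 'k mpoly) ^ m * (g * h) \<in> ideal_pow n (DI n) m" by (rule Sym_pow[OF n3 j(1) m gh])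
          moreover have "(Var j :: 'k mpoly) ^ m * (g * h) = (g * Var j ^ (m + m)) * f"
            by (simp add: h_def algebra_simps power_add)
          ultimately have "g * Var j ^ (m + m) \<in> P" using P(3) gp Vp by (simp add: polys_mult)
          then have "g \<in> P \<or> (Var j :: 'k mpoly) ^ (m + m) \<in> P" using P(1) gp Vp by (simp add: prime_ideal_def)
          moreover have "(Var j :: 'k mpoly) ^ (m + m) \<notin> P" using prime_pow[OF P(1) Var_polys[OF j(1)]] j(2) by blast
          ultimately show "g \<in> P" by blast
        qed
      qed
      then obtain v where "v < n" "P = Qs n (closed_nbhd n v) 1" using core[OF n3 m P(1) hp] by blast
      then show ?thesis using minW[OF n3] by blast
    qed
  qed
  show ?thesis
    unfolding nearly_normally_torsion_free_def
  proof (intro exI conjI allI impI)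
    show "(1::nat) \<le> 1" by simp
    show "monomial_ideal n M" by (rule Mmon)
    show "prime_ideal n M" by (rule Mprime)
    fix m :: nat assume "1 \<le> m \<and> m \<le> 1"
    then have "m = 1" by simp
    then show "Ass n (ideal_pow n (DI n) m) = minprimes n (DI n :: 'k mpoly set)" using A1 by simp
  next
    fix m :: nat assume "1 + 1 \<le> m"
    then show "Ass n (ideal_pow n (DI n) m) \<subseteq> minprimes n (DI n :: 'k mpoly set) \<union> {M}" using A2 by simp
  qed
qed


end
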